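(* Let $g:\mathbb{R}^N\to\mathbb{R}\cup\{+\infty\}$ be proper and lower semi-continuous, and let $f:\mathbb{R}^N\to\mathbb{R}$ be continuously differentiable such that, for some $\mathbf{L}\in\mathbb{S}_{++}(N)$, the gradient of $f\circ\mathbf{L}^{-1/2}$ is $1$-Lipschitz continuous; assume $f+g$ is bounded from below. Suppose $f(x)=\frac12\langle x,\mathbf{H}x\rangle+\langle b,x\rangle+c$ with $\mathbf{H}\in\mathbb{S}_{++}(N)$, $b\in\mathbb{R}^N$, $c\in\mathbb{R}$. Let $x_k\in\mathbb{R}^N$, $d\in\mathbb{R}^N\setminus\{0\}$, and for $\beta\in\mathbb{R}$ put $y^{(\beta)}:=x_k+\beta d$. Let $\mathbf{T}\in\mathbb{S}_{++}(N)$ be such that $\mathbf{M}:=\mathbf{T}-\mathbf{H}\in\mathbb{S}_{++}(N)$, and consider $$\min_{x\in\mathbb{R}^N}\min_{\beta\in\mathbb{R}}\ \ell(x;y^{(\beta)})+\tfrac12\|x-y^{(\beta)}\|_{\mathbf{T}}^2,\qquad \ell(x;y):=g(x)+f(y)+\langle\nabla f(y),x-y\rangle.\quad(\ast)$$ Then, for each fixed $x$, the inner minimization over $\beta$ is solved by $$\beta^*=\frac{\langle d,x-x_k\rangle_{\mathbf{M}}}{\langle d,d\rangle_{\mathbf{M}}},$$ and problem $(\ast)$ is equivalent to $$x_{k+1}\in\operatorname*{argmin}_{x\in\mathbb{R}^N}\ g(x)+\tfrac12\big\|x-x_k+\mathbf{Q}^{-1}\nabla f(x_k)\big\|_{\mathbf{Q}}^2,$$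 where $$\mathbf{Q}:=\mathbf{T}-uu^\top,\quad u:=\frac{\mathbf{M}d}{\|d\|_{\mathbf{M}}},\quad \mathbf{Q}^{-1}=\mathbf{T}^{-1}+\frac{\mathbf{T}^{-1}uu^\top\mathbf{T}^{-1}}{1-u^\top\mathbf{T}^{-1}u}.$$
   Context: $\mathbb{S}_{++}(N)$ denotes the set of symmetric positive definite $N\times N$ real matrices. For a matrix $\mathbf{V}$, $\|x\|_{\mathbf{V}}^2:=\langle x,\mathbf{V}x\rangle$ and $\langle x,y\rangle_{\mathbf{V}}:=\langle x,\mathbf{V}y\rangle$, with $\langle\cdot,\cdot\rangle$ the standard Euclidean inner product. "Equivalent" means the $x$-components of minimizers of $(\ast)$ are exactly the minimizers of the stated problem. *)

theory Defs
  imports "HOL-Analysis.Analysis"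
begin

definition spd :: "real^'n^'n \<Rightarrow> bool" where
  "spd A \<longleftrightarrow> transpose A = A \<and> (\<forall>x. x \<noteq> 0 \<longrightarrow> 0 < x \<bullet> (A *v x))"

definition winner :: "real^'n^'n \<Rightarrow> real^'n \<Rightarrow> real^'n \<Rightarrow> real" where
  "winner V x y = x \<bullet> (V *v y)"

definition wnorm2 :: "real^'n^'n \<Rightarrow> real^'n \<Rightarrow> real" where
  "wnorm2 V x = x \<bullet> (V *v x)"

definition outer :: "real^'n \<Rightarrow> real^'n \<Rightarrow> real^'n^'n" where
  "outer u v = (\<chi> i j. u $ i * v $ j)"

definition grad :: "(real^'n \<Rightarrow> real) \<Rightarrow> real^'n \<Rightarrow> real^'n" where
  "grad f x = (THE D. GDERIV f x :> D)"

definition proper_fun :: "('a \<Rightarrow> ereal) \<Rightarrow> bool" where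
  "proper_fun g \<longleftrightarrow> (\<forall>x. g x \<noteq> -\<infinity>) \<and> (\<exists>x. g x \<noteq> \<infinity>)"

definition lsc_fun :: "('a::topological_space \<Rightarrow> ereal) \<Rightarrow> bool" where
  "lsc_fun g \<longleftrightarrow> (\<forall>x. g x \<le> Liminf (at x) g)"

definition lin_model :: "(real^'n \<Rightarrow> ereal) \<Rightarrow> (real^'n \<Rightarrow> real) \<Rightarrow> real^'n \<Rightarrow> real^'n \<Rightarrow> ereal" where
  "lin_model g f x y = g x + ereal (f y + grad f y \<bullet> (x - y))"

end

theory Submission
  imports Defs
begin

lemma sym_inner:
  fixes A :: "real^'n^'n"
  assumes "transpose A = A"
  shows "x \<bullet> (A *v y) = (A *v x) \<bullet> y"
  by (metis assms dot_lmul_matrix transpose_matrix_vector)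

lemma sym_inner2:
  fixes A :: "real^'n^'n"
  assumes "transpose A = A"
  shows "x \<bullet> (A *v y) = y \<bullet> (A *v x)"
  by (metis assms sym_inner inner_commute)

lemma outer_mv: "outer u v *v w = (v \<bullet> w) *\<^sub>R u"
  by (simp add: vec_eq_iff outer_def matrix_vector_mult_def inner_vec_def sum_distrib_left ac_simps)

lemma outer_sym: "transpose (outer u u) = outer u u"
  by (simp add: vec_eq_iff outer_def transpose_def)

lemma inv_unique:
  fixes A B :: "real^'n^'n"
  assumes "A ** B = mat 1"
  shows "matrix_inv A = B"
proof -
  have BA: "B ** A = mat 1" using assms matrix_left_right_inverse by blast
  show ?thesis unfolding matrix_inv_def
  proof (rule some_equality)
    fix C assume C: "A ** C = mat 1 \<and> C ** A = mat 1"
    have "C = (B ** A) ** C" using BA by simp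
    also have "\<dots> = B ** (A ** C)" by (simp add: matrix_mul_assoc)
    also have "\<dots> = B" using C by simp
    finally show "C = B" .
  qed (use assms BA in auto)
qed

lemma spd_inv:
  fixes A :: "real^'n^'n"
  assumes "spd A"
  shows "A ** matrix_inv A = mat 1"
proof -
  have "\<forall>x. A *v x = 0 \<longrightarrow> x = 0"
    using assms unfolding spd_def by (metis inner_zero_right less_irrefl)
  then obtain B where "B ** A = mat 1" using matrix_left_invertible_ker by blast
  then have "A ** B = mat 1" using matrix_left_right_inverse by blast
  then show ?thesis using inv_unique[of A B] by simp
qed

lemma quad_deriv:
  fixes H :: "real^'n^'n"
  assumes "transpose H = H"
  shows "((\<lambda>x. (1/2) * (x \<bullet> (H *v x)) + b \<bullet> x + c) has_derivative (\<lambda>h. h \<bullet> (H *v y + b))) (at y)"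
proof -
  have lin: "((\<lambda>x. H *v x) has_derivative (\<lambda>x. H *v x)) (at y)"
    by (simp add: bounded_linear_imp_has_derivative matrix_vector_mul_bounded_linear)
  have "((\<lambda>x. (1/2) * (x \<bullet> (H *v x)) + b \<bullet> x + c) has_derivative
     (\<lambda>h. (1/2) * (y \<bullet> (H *v h) + h \<bullet> (H *v y)) + b \<bullet> h + 0)) (at y)"
    apply (intro has_derivative_add has_derivative_mult_right has_derivative_inner has_derivative_ident lin has_derivative_const)
    apply (rule has_derivative_eq_rhs[OF has_derivative_inner_right[OF has_derivative_ident]])
    apply simp
    done
  moreover have "(\<lambda>h. (1/2) * (y \<bullet> (H *v h) + h \<bullet> (H *v y)) + b \<bullet> h) = (\<lambda>h. h \<bullet> (H *v y + b))"
    using sym_inner2[OF assms] by (auto simp: inner_add_right inner_commute)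
  ultimately show ?thesis by simp
qed

theorem mainTheorem2:
  fixes g :: "real^'n \<Rightarrow> ereal" and f :: "real^'n \<Rightarrow> real"
    and H T :: "real^'n^'n" and b xk d :: "real^'n" and c :: real
  assumes g_proper: "proper_fun g" and g_lsc: "lsc_fun g"
    and f_C1: "\<forall>x. f differentiable (at x)" "continuous_on UNIV (grad f)"
    and f_lip: "\<exists>L S. spd L \<and> spd S \<and> S ** S = matrix_inv L
                     \<and> lipschitz_on 1 UNIV (grad (\<lambda>z. f (S *v z)))"
    and bdd: "\<exists>m. \<forall>x. ereal m \<le> ereal (f x) + g x"
    and f_quad: "\<forall>x. f x = (1/2) * (x \<bullet> (H *v x)) + b \<bullet> x + c"
    and H_spd: "spd H"
    and d_nz: "d \<noteq> 0"
    and T_spd: "spd T" and M_spd: "spd (T - H)"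
  shows
    "let M = T - H;
         y = (\<lambda>\<beta>::real. xk + \<beta> *\<^sub>R d);
         \<Phi> = (\<lambda>x \<beta>. lin_model g f x (y \<beta>) + ereal ((1/2) * wnorm2 T (x - y \<beta>)));
         u = (1 / sqrt (wnorm2 M d)) *\<^sub>R (M *v d);
         Q = T - outer u u;
         Ti = matrix_inv T
     in (\<forall>x \<beta>. \<Phi> x (winner M d (x - xk) / winner M d d) \<le> \<Phi> x \<beta>)
      \<and> {x. \<exists>\<beta>. \<forall>x' \<beta>'. \<Phi> x \<beta> \<le> \<Phi> x' \<beta>'}
        = {x. \<forall>x'. g x + ereal ((1/2) * wnorm2 Q (x - xk + matrix_inv Q *v grad f xk))
                   \<le> g x' + ereal ((1/2) * wnorm2 Q (x' - xk + matrix_inv Q *v grad f xk))}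
      \<and> invertible Q
      \<and> matrix_inv Q = Ti + (1 / (1 - u \<bullet> (Ti *v u))) *\<^sub>R (Ti ** outer u u ** Ti)"
  proof -
  define M where "M = T - H"
  define y where "y = (\<lambda>\<beta>::real. xk + \<beta> *\<^sub>R d)"
  define \<Phi> where "\<Phi> = (\<lambda>x \<beta>. lin_model g f x (y \<beta>) + ereal ((1/2) * wnorm2 T (x - y \<beta>)))"
  define u where "u = (1 / sqrt (wnorm2 M d)) *\<^sub>R (M *v d)"
  define Q where "Q = T - outer u u"
  define Ti where "Ti = matrix_inv T"
  define D where "D = d \<bullet> (M *v d)"
  define p where "p = H *v xk + b"
  have symH: "transpose H = H" using H_spd by (simp add: spd_def)
  have symT: "transpose T = T" using T_spd by (simp add: spd_def)
  have symM: "transpose M = M" using M_spd by (simp add: spd_def M_def)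
  have symQ: "transpose Q = Q"
    unfolding Q_def using symT outer_sym[of u]
    by (simp add: transpose_def vec_eq_iff)
  have Dpos: "D > 0" using M_spd d_nz by (simp add: spd_def D_def M_def)
  have Mpsd: "\<And>z. z \<bullet> (M *v z) \<ge> 0"
    using M_spd by (metis M_def inner_zero_left order_le_less spd_def)
  have fdef: "f = (\<lambda>x. (1/2) * (x \<bullet> (H *v x)) + b \<bullet> x + c)"
    using f_quad by auto
  have gradf: "grad f z = H *v z + b" for z
  proof -
    have hd: "(f has_derivative (\<lambda>h. h \<bullet> (H *v z + b))) (at z)"
      unfolding fdef by (rule quad_deriv[OF symH])
    show ?thesis unfolding grad_def gderiv_def
    proof (rule the_equality)
      show "(f has_derivative (\<lambda>h. h \<bullet> (H *v z + b))) (at z)" by (rule hd)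
    next
      fix D' assume "(f has_derivative (\<lambda>h. h \<bullet> D')) (at z)"
      then have "(\<lambda>h. h \<bullet> D') = (\<lambda>h. h \<bullet> (H *v z + b))"
        using hd has_derivative_unique by blast
      then have "(D' - (H *v z + b)) \<bullet> D' = (D' - (H *v z + b)) \<bullet> (H *v z + b)"
        by metis
      then have "(D' - (H *v z + b)) \<bullet> (D' - (H *v z + b)) = 0"
        by (simp add: inner_diff_right)
      then show "D' = H *v z + b" by simp
    qed
  qed
  have fid: "f v + (H *v v + b) \<bullet> z + (1/2) * (z \<bullet> (T *v z))
      = f (v + z) + (1/2) * (z \<bullet> (M *v z))" for v z
  proof -
    have s1: "z \<bullet> (H *v v) = v \<bullet> (H *v z)" using sym_inner2[OF symH] by blast
    have s2: "(H *v v) \<bullet> z = v \<bullet> (H *v z)" using s1 by (simp add: inner_commute)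
    show ?thesis
      unfolding M_def
      by (simp add: f_quad inner_add_left inner_add_right matrix_vector_right_distrib
          matrix_vector_mult_diff_rdistrib inner_diff_right s1 s2 algebra_simps)
  qed
  have fexp: "f (xk + w) = f xk + p \<bullet> w + (1/2) * (w \<bullet> (H *v w))" for w
  proof -
    have s1: "w \<bullet> (H *v xk) = xk \<bullet> (H *v w)" using sym_inner2[OF symH] by blast
    have s2: "(H *v xk) \<bullet> w = xk \<bullet> (H *v w)" using s1 by (simp add: inner_commute)
    show ?thesis
      unfolding p_def
      by (simp add: f_quad inner_add_left inner_add_right matrix_vector_right_distrib
          s1 s2 algebra_simps)
  qed
  have qexp: "(w - \<beta> *\<^sub>R d) \<bullet> (M *v (w - \<beta> *\<^sub>R d))
      = w \<bullet> (M *v w) - 2 * \<beta> * (d \<bullet> (M *v w)) + \<beta>^2 * D" for w \<beta>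
  proof -
    have s1: "w \<bullet> (M *v d) = d \<bullet> (M *v w)" using sym_inner2[OF symM] by blast
    show ?thesis unfolding D_def
      by (simp add: inner_diff_left inner_diff_right matrix_vector_mult_diff_distrib
          matrix_vector_mult_scaleR s1 power2_eq_square algebra_simps)
  qed
  have qmin: "A - 2 * \<beta> * a + \<beta>^2 * D \<ge> A - 2 * (a/D) * a + (a/D)^2 * D"
    for A a \<beta> :: real
  proof -
    have "(A - 2 * \<beta> * a + \<beta>^2 * D) - (A - 2 * (a/D) * a + (a/D)^2 * D)
          = D * (\<beta> - a/D)^2"
      using Dpos by (simp add: field_simps power2_eq_square)
    moreover have "D * (\<beta> - a/D)^2 \<ge> 0" using Dpos by simp
    ultimately show ?thesis by linarith
  qed
  have qminval: "A - 2 * (a/D) * a + (a/D)^2 * D = A - a^2 / D" for A a :: real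
    using Dpos by (simp add: field_simps power2_eq_square)
  have CS: "(d \<bullet> (M *v w))^2 / D \<le> w \<bullet> (M *v w)" for w
    using Mpsd[of "w - (d \<bullet> (M *v w) / D) *\<^sub>R d"] qexp[of w "d \<bullet> (M *v w) / D"]
      qminval[of "w \<bullet> (M *v w)" "d \<bullet> (M *v w)"] by linarith
  have uw: "(u \<bullet> w)^2 = (d \<bullet> (M *v w))^2 / D" for w
  proof -
    have "(M *v d) \<bullet> w = d \<bullet> (M *v w)" using sym_inner[OF symM] by metis
    then show ?thesis unfolding u_def D_def wnorm2_def
      using Dpos unfolding D_def
      by (simp add: power_divide power_mult_distrib)
  qed
  have Qquad: "w \<bullet> (Q *v w) = w \<bullet> (M *v w) + w \<bullet> (H *v w) - (d \<bullet> (M *v w))^2 / D" for w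
  proof -
    have "T *v w = M *v w + H *v w" by (simp add: M_def matrix_vector_mult_diff_rdistrib)
    then show ?thesis unfolding Q_def using uw[of w]
      by (simp add: matrix_vector_mult_diff_rdistrib inner_diff_right inner_add_right outer_mv
          power2_eq_square inner_commute)
  qed
  have Qker: "Q *v z = 0 \<Longrightarrow> z = 0" for z
  proof (rule ccontr)
    assume "Q *v z = 0" "z \<noteq> 0"
    then have "z \<bullet> (H *v z) > 0" using H_spd by (simp add: spd_def)
    moreover have "z \<bullet> (Q *v z) = 0" using \<open>Q *v z = 0\<close> by simp
    ultimately show False using Qquad[of z] CS[of z] by linarith
  qed
  then obtain B where "B ** Q = mat 1" using matrix_left_invertible_ker by blast
  then have QB: "Q ** B = mat 1" using matrix_left_right_inverse by blast
  then have invQ: "invertible Q" using invertible_def \<open>B ** Q = mat 1\<close> by blast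
  have QQi: "Q *v (matrix_inv Q *v z) = z" for z
    using QB inv_unique[OF QB] by (metis matrix_vector_mul_assoc matrix_vector_mul_lid)
  have TTi: "T *v (Ti *v z) = z" for z
    using spd_inv[OF T_spd] unfolding Ti_def by (metis matrix_vector_mul_assoc matrix_vector_mul_lid)
  define R where "R = (\<lambda>x \<beta>. f x + (1/2) * wnorm2 M (x - y \<beta>))"
  have PhiR: "\<Phi> x \<beta> = g x + ereal (R x \<beta>)" for x \<beta>
  proof -
    have "f (y \<beta>) + grad f (y \<beta>) \<bullet> (x - y \<beta>) + (1/2) * wnorm2 T (x - y \<beta>) = R x \<beta>"
      using fid[of "y \<beta>" "x - y \<beta>"] unfolding R_def wnorm2_def gradf by simp
    then show ?thesis unfolding \<Phi>_def lin_model_def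
      by (metis add.assoc plus_ereal.simps(1))
  qed
  define bs where "bs = (\<lambda>x. winner M d (x - xk) / winner M d d)"
  have Rexp: "R x \<beta> = f x + (1/2) * ((x - xk) \<bullet> (M *v (x - xk)) - 2 * \<beta> * (d \<bullet> (M *v (x - xk))) + \<beta>^2 * D)" for x \<beta>
  proof -
    have e: "x - y \<beta> = (x - xk) - \<beta> *\<^sub>R d" unfolding y_def by simp
    show ?thesis unfolding R_def wnorm2_def e qexp by simp
  qed
  have Rmin: "R x (bs x) \<le> R x \<beta>" for x \<beta>
    unfolding Rexp bs_def winner_def D_def[symmetric]
    using qmin[where A="(x - xk) \<bullet> (M *v (x - xk))" and \<beta>=\<beta> and a="d \<bullet> (M *v (x - xk))"] by simp
  define C where "C = f xk - (1/2) * (p \<bullet> (matrix_inv Q *v p))"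
  define G where "G = (\<lambda>x. (1/2) * wnorm2 Q (x - xk + matrix_inv Q *v grad f xk))"
  have Rval: "R x (bs x) = G x + C" for x
  proof -
    define w where "w = x - xk"
    define v where "v = matrix_inv Q *v p"
    have Qv: "Q *v v = p" unfolding v_def by (rule QQi)
    have e1: "w \<bullet> (Q *v v) = p \<bullet> w" using Qv by (simp add: inner_commute)
    have e2: "v \<bullet> (Q *v w) = p \<bullet> w" using sym_inner[OF symQ, of v w] Qv by (simp add: inner_commute)
    have e3: "v \<bullet> (Q *v v) = p \<bullet> v" using Qv by (simp add: inner_commute)
    have "G x = (1/2) * (w \<bullet> (Q *v w) + 2 * (p \<bullet> w) + p \<bullet> v)"
      unfolding G_def wnorm2_def gradf p_def[symmetric] v_def[symmetric] w_def[symmetric]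
      using e1 e2 e3 by (simp add: inner_add_left inner_add_right matrix_vector_right_distrib)
    moreover have "x = xk + w" unfolding w_def by simp
    ultimately show ?thesis
      unfolding Rexp bs_def winner_def D_def[symmetric] C_def v_def[symmetric] w_def[symmetric]
      using fexp[of w] Qquad[of w] qminval[of "w \<bullet> (M *v w)" "d \<bullet> (M *v w)"]
      by (simp add: algebra_simps)
  qed
  have P1: "\<forall>x \<beta>. \<Phi> x (winner M d (x - xk) / winner M d d) \<le> \<Phi> x \<beta>"
    using Rmin unfolding PhiR bs_def by (simp add: add_left_mono)
  have Gfull: "\<Phi> x (bs x) = (g x + ereal (G x)) + ereal C" for x
    unfolding PhiR Rval by (metis add.assoc plus_ereal.simps(1))
  have cancel: "(a + ereal C \<le> b + ereal C) \<longleftrightarrow> a \<le> b" for a b :: ereal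
    by (metis ereal_add_le_add_iff2 ereal_uminus_uminus ereal_plus_eq_PInfty
        ereal_less_PInfty ereal_minus_less_iff add_right_mono ereal_minus(1) ereal_add_uminus_conv_diff
        PInfty_neq_ereal(1) MInfty_neq_ereal(1) add.commute)
  have Gx: "(1/2) * wnorm2 Q (x - xk + matrix_inv Q *v grad f xk) = G x" for x
    unfolding G_def by simp
  have P2: "{x. \<exists>\<beta>. \<forall>x' \<beta>'. \<Phi> x \<beta> \<le> \<Phi> x' \<beta>'}
        = {x. \<forall>x'. g x + ereal ((1/2) * wnorm2 Q (x - xk + matrix_inv Q *v grad f xk))
                   \<le> g x' + ereal ((1/2) * wnorm2 Q (x' - xk + matrix_inv Q *v grad f xk))}"
  proof (intro equalityI subsetI; simp only: mem_Collect_eq Gx)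
    fix x assume "\<exists>\<beta>. \<forall>x' \<beta>'. \<Phi> x \<beta> \<le> \<Phi> x' \<beta>'"
    then obtain \<beta> where hb: "\<forall>x' \<beta>'. \<Phi> x \<beta> \<le> \<Phi> x' \<beta>'" by blast
    show "\<forall>x'. g x + ereal (G x) \<le> g x' + ereal (G x')"
    proof
      fix x'
      have "\<Phi> x (bs x) \<le> \<Phi> x \<beta>" using Rmin unfolding PhiR by (simp add: add_left_mono)
      also have "\<dots> \<le> \<Phi> x' (bs x')" using hb by blast
      finally have "(g x + ereal (G x)) + ereal C \<le> (g x' + ereal (G x')) + ereal C"
        by (simp only: Gfull)
      then show "g x + ereal (G x) \<le> g x' + ereal (G x')" using cancel by blast
    qed
  next
    fix x assume h: "\<forall>x'. g x + ereal (G x) \<le> g x' + ereal (G x')"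
    show "\<exists>\<beta>. \<forall>x' \<beta>'. \<Phi> x \<beta> \<le> \<Phi> x' \<beta>'"
    proof (intro exI allI)
      fix x' \<beta>'
      have "\<Phi> x (bs x) \<le> \<Phi> x' (bs x')" unfolding Gfull using cancel h by blast
      also have "\<dots> \<le> \<Phi> x' \<beta>'" using Rmin unfolding PhiR by (simp add: add_left_mono)
      finally show "\<Phi> x (bs x) \<le> \<Phi> x' \<beta>'" .
    qed
  qed
  define \<alpha> where "\<alpha> = u \<bullet> (Ti *v u)"
  have Md0: "M *v d \<noteq> 0" using Dpos unfolding D_def by auto
  have sq: "sqrt (wnorm2 M d) > 0" using Dpos unfolding D_def wnorm2_def by simp
  have u0: "u \<noteq> 0" unfolding u_def using Md0 sq by simp
  have Qmv: "Q *v z = T *v z - (u \<bullet> z) *\<^sub>R u" for z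
    unfolding Q_def by (simp add: matrix_vector_mult_diff_rdistrib outer_mv)
  have a1: "\<alpha> \<noteq> 1"
  proof
    assume "\<alpha> = 1"
    then have "Q *v (Ti *v u) = 0" unfolding Qmv TTi \<alpha>_def by simp
    then have "Ti *v u = 0" by (rule Qker)
    then have "u = 0" using TTi[of u] by simp
    then show False using u0 by simp
  qed
  define X where "X = Ti + (1 / (1 - \<alpha>)) *\<^sub>R (Ti ** outer u u ** Ti)"
  have "Q ** X = mat 1"
  proof -
    have "(Q ** X) *v z = mat 1 *v z" for z
    proof -
      define s where "s = 1 / (1 - \<alpha>)"
      define t where "t = u \<bullet> (Ti *v z)"
      have s1: "s * (1 - \<alpha>) = 1" unfolding s_def using a1 by simp
      have "X *v z = Ti *v z + (s * t) *\<^sub>R (Ti *v u)"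
        unfolding X_def s_def[symmetric] t_def
        by (simp add: matrix_vector_mult_add_rdistrib scaleR_matrix_vector_assoc[symmetric]
            matrix_vector_mul_assoc[symmetric] outer_mv matrix_vector_mult_scaleR)
      then have "(Q ** X) *v z = Q *v (Ti *v z) + (s * t) *\<^sub>R (Q *v (Ti *v u))"
        by (simp add: matrix_vector_mul_assoc[symmetric] matrix_vector_right_distrib matrix_vector_mult_scaleR)
      also have "\<dots> = z - t *\<^sub>R u + (s * t) *\<^sub>R (u - \<alpha> *\<^sub>R u)"
        unfolding Qmv TTi t_def \<alpha>_def by simp
      also have "\<dots> = z + (t * (s * (1 - \<alpha>) - 1)) *\<^sub>R u"
        by (simp add: algebra_simps)
      also have "\<dots> = z" using s1 by simp
      finally show ?thesis by simp
    qed
    then show ?thesis by (simp add: matrix_eq)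
  qed
  then have P4: "matrix_inv Q = X" by (rule inv_unique)
  show ?thesis
    using P1 P2 invQ P4
    unfolding Let_def M_def y_def \<Phi>_def u_def Q_def Ti_def X_def \<alpha>_def
    by blast
qed

end
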